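(* Let $k$ be a difference field of characteristic $0$, $R=k\{y_1,\ldots,y_n\}$, and let $I$ be a monomial $\sigma$-ideal of $R$ with support set $S=\{\mathbf{u}\in\mathbb{N}[x]^n:\mathbf{y}^{\mathbf{u}}\in I\}$ (so $I=\bigoplus_{\mathbf{u}\in S}k\mathbf{y}^{\mathbf{u}}$). Then: (1) $I$ is radical iff for all $m\in\mathbb{N}\setminus\{0\}$ and $\mathbf{u}\in\mathbb{N}[x]^n$, $m\mathbf{u}\in S$ implies $\mathbf{u}\in S$; (2) $I$ is reflexive iff for all $\mathbf{u}\in\mathbb{N}[x]^n$, $x\mathbf{u}\in S$ implies $\mathbf{u}\in S$; (3) $I$ is perfect iff for all nonzero $g\in\mathbb{N}[x]$ and $\mathbf{u}\in\mathbb{N}[x]^n$, $g\mathbf{u}\in S$ implies $\mathbf{u}\in S$; (4) $I$ is prime iff for all $\mathbf{u},\mathbf{v}\in\mathbb{N}[x]^n$, $\mathbf{u}+\mathbf{v}\in S$ implies $\mathbf{u}\in S$ or $\mathbf{v}\in S$.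
   Context: A difference field is a field $k$ with a ring endomorphism $\sigma$; $R=k\{y_1,\ldots,y_n\}$ is the polynomial ring over $k$ in the variables $\sigma^j(y_i)$, with $\sigma$ extended naturally. For $p=\sum_i c_ix^i\in\mathbb{N}[x]$ and $a\in R$, $a^p=\prod_i(\sigma^i(a))^{c_i}$; for $\mathbf{u}\in\mathbb{N}[x]^n$, $\mathbf{y}^{\mathbf{u}}=y_1^{u_1}\cdots y_n^{u_n}$; $\mathbb{N}[x]^n$ is a module over the semiring $\mathbb{N}[x]$ coordinatewise. A $\sigma$-ideal is an ideal $I$ with $\sigma(I)\subseteq I$; monomial if generated by monomials. $I$ is reflexive if $\sigma(a)\in I$ implies $a\in I$; perfect if $a^g\in I$ implies $a\in I$ for every nonzero $g\in\mathbb{N}[x]$; prime means prime as an ideal. *)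

theory Defs
  imports Main "HOL-Library.Poly_Mapping" "HOL-Computational_Algebra.Polynomial"
begin

text \<open>Variables of the difference polynomial ring k{y_1..y_n}: the pair (i,j) stands for
  sigma^j(y_i); the index type 'n (finite) enumerates y_1..y_n.\<close>

type_synonym ('n, 'k) dpoly = "(('n \<times> nat) \<Rightarrow>\<^sub>0 nat) \<Rightarrow>\<^sub>0 'k"

type_synonym 'n exps = "'n \<Rightarrow> nat poly"

definition exp_monomial :: "('n::finite) exps \<Rightarrow> ('n \<times> nat) \<Rightarrow>\<^sub>0 nat" where
  "exp_monomial u = Abs_poly_mapping (\<lambda>(i, j). coeff (u i) j)"

definition ymon :: "('n::finite) exps \<Rightarrow> ('n, 'k::comm_ring_1) dpoly" where
  "ymon u = Poly_Mapping.single (exp_monomial u) 1"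

definition exps_smult :: "nat poly \<Rightarrow> 'n exps \<Rightarrow> 'n exps" where
  "exps_smult g u = (\<lambda>i. g * u i)"

definition exps_add :: "'n exps \<Rightarrow> 'n exps \<Rightarrow> 'n exps" where
  "exps_add u v = (\<lambda>i. u i + v i)"

definition shift_mon :: "(('n \<times> nat) \<Rightarrow>\<^sub>0 nat) \<Rightarrow> (('n \<times> nat) \<Rightarrow>\<^sub>0 nat)" where
  "shift_mon m = Abs_poly_mapping (\<lambda>(i, j). if j = 0 then 0 else Poly_Mapping.lookup m (i, j - 1))"

definition sigmaR :: "('k \<Rightarrow> 'k) \<Rightarrow> ('n, 'k::comm_ring_1) dpoly \<Rightarrow> ('n, 'k) dpoly" where
  "sigmaR \<sigma> p = (\<Sum>m\<in>Poly_Mapping.keys p. Poly_Mapping.single (shift_mon m) (\<sigma> (Poly_Mapping.lookup p m)))"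

definition dpower :: "('k \<Rightarrow> 'k) \<Rightarrow> ('n, 'k::comm_ring_1) dpoly \<Rightarrow> nat poly \<Rightarrow> ('n, 'k) dpoly" where
  "dpower \<sigma> a g = (\<Prod>i\<le>degree g. ((sigmaR \<sigma> ^^ i) a) ^ coeff g i)"

definition is_ideal :: "'a::comm_ring_1 set \<Rightarrow> bool" where
  "is_ideal I \<longleftrightarrow> 0 \<in> I \<and> (\<forall>a\<in>I. \<forall>b\<in>I. a + b \<in> I) \<and> (\<forall>r a. a \<in> I \<longrightarrow> r * a \<in> I)"

definition ideal_gen :: "'a::comm_ring_1 set \<Rightarrow> 'a set" where
  "ideal_gen G = \<Inter>{I. is_ideal I \<and> G \<subseteq> I}"

definition sigma_ideal :: "('k \<Rightarrow> 'k) \<Rightarrow> ('n, 'k::comm_ring_1) dpoly set \<Rightarrow> bool" where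
  "sigma_ideal \<sigma> I \<longleftrightarrow> is_ideal I \<and> sigmaR \<sigma> ` I \<subseteq> I"

definition monomial_ideal :: "('n::finite, 'k::comm_ring_1) dpoly set \<Rightarrow> bool" where
  "monomial_ideal I \<longleftrightarrow> is_ideal I \<and> (\<exists>G. G \<subseteq> range ymon \<and> I = ideal_gen G)"

definition support_set :: "('n::finite, 'k::comm_ring_1) dpoly set \<Rightarrow> 'n exps set" where
  "support_set I = {u. ymon u \<in> I}"

definition radical_ideal :: "'a::comm_ring_1 set \<Rightarrow> bool" where
  "radical_ideal I \<longleftrightarrow> (\<forall>a (m::nat). m > 0 \<longrightarrow> a ^ m \<in> I \<longrightarrow> a \<in> I)"

definition reflexive_ideal :: "('k \<Rightarrow> 'k) \<Rightarrow> ('n, 'k::comm_ring_1) dpoly set \<Rightarrow> bool" where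
  "reflexive_ideal \<sigma> I \<longleftrightarrow> (\<forall>a. sigmaR \<sigma> a \<in> I \<longrightarrow> a \<in> I)"

definition perfect_ideal :: "('k \<Rightarrow> 'k) \<Rightarrow> ('n, 'k::comm_ring_1) dpoly set \<Rightarrow> bool" where
  "perfect_ideal \<sigma> I \<longleftrightarrow> (\<forall>a g. g \<noteq> 0 \<longrightarrow> dpower \<sigma> a g \<in> I \<longrightarrow> a \<in> I)"

definition prime_ideal :: "'a::comm_ring_1 set \<Rightarrow> bool" where
  "prime_ideal I \<longleftrightarrow> is_ideal I \<and> I \<noteq> UNIV \<and> (\<forall>a b. a * b \<in> I \<longrightarrow> a \<in> I \<or> b \<in> I)"

end

theory Submission
  imports Defs
begin


lemma ideal_sum:
  assumes "is_ideal I" "finite A" "\<And>x. x \<in> A \<Longrightarrow> f x \<in> I"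
  shows "sum f A \<in> I"
  using assms(2,3)
proof (induction A rule: finite_induct)
  case empty then show ?case using assms(1) by (simp add: is_ideal_def)
next
  case (insert x F) then show ?case using assms(1) by (simp add: is_ideal_def)
qed

lemma ideal_mult: "is_ideal I \<Longrightarrow> a \<in> I \<Longrightarrow> r * a \<in> I"
  by (simp add: is_ideal_def)

lemma ideal_add: "is_ideal I \<Longrightarrow> a \<in> I \<Longrightarrow> b \<in> I \<Longrightarrow> a + b \<in> I"
  by (simp add: is_ideal_def)

lemma ideal_diff: "is_ideal I \<Longrightarrow> a \<in> I \<Longrightarrow> b \<in> I \<Longrightarrow> a - b \<in> I"
  using ideal_add[of I a "(-1) * b"] ideal_mult[of I b "-1"] by simp

lemma ideal_cong_mult:
  assumes "is_ideal I" "x - y \<in> I" "z - w \<in> I"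
  shows "x * z - y * w \<in> I"
proof -
  have "x * z - y * w = x * (z - w) + w * (x - y)" by (simp add: algebra_simps)
  then show ?thesis using assms by (metis ideal_add ideal_mult)
qed

lemma ideal_cong_power:
  assumes "is_ideal I" "x - y \<in> I"
  shows "x ^ n - y ^ n \<in> I"
proof (induction n)
  case 0 then show ?case using assms(1) by (simp add: is_ideal_def)
next
  case (Suc n)
  have "x * x ^ n - y * y ^ n \<in> I" by (rule ideal_cong_mult[OF assms(1) assms(2) Suc])
  then show ?case by simp
qed

lemma ideal_cong_prod:
  assumes "is_ideal I" "finite A" "\<And>i. i \<in> A \<Longrightarrow> x i - y i \<in> I"
  shows "prod x A - prod y A \<in> I"
  using assms(2,3)
proof (induction A rule: finite_induct)
  case empty then show ?case using assms(1) by (simp add: is_ideal_def)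
next
  case (insert a F)
  have "x a * prod x F - y a * prod y F \<in> I"
    by (rule ideal_cong_mult[OF assms(1)]) (use insert in auto)
  then show ?case using insert by simp
qed

lemma ideal_diff_mem:
  assumes "is_ideal I" "x - y \<in> I" "y \<notin> I" shows "x \<notin> I"
proof
  assume "x \<in> I"
  then have "x - (x - y) \<in> I" by (rule ideal_diff[OF assms(1) _ assms(2)])
  then show False using assms by simp
qed

lemma pm_sum_singles:
  "(\<Sum>m\<in>Poly_Mapping.keys p. Poly_Mapping.single m (Poly_Mapping.lookup p m)) = p"
proof (rule poly_mapping_eqI)
  fix k
  show "Poly_Mapping.lookup (\<Sum>m\<in>Poly_Mapping.keys p. Poly_Mapping.single m (Poly_Mapping.lookup p m)) k = Poly_Mapping.lookup p k"
    by (simp add: lookup_sum lookup_single when_def in_keys_iff)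
qed

lemma single_eq_mult: "Poly_Mapping.single m (c::'a::comm_ring_1) = Poly_Mapping.single 0 c * Poly_Mapping.single m 1"
  by (simp add: mult_single)

lemma monomial_ideal_mem:
  fixes I :: "('n::finite, 'k::comm_ring_1) dpoly set"
  assumes mono: "monomial_ideal I"
  shows "p \<in> I \<longleftrightarrow> (\<forall>m\<in>Poly_Mapping.keys p. Poly_Mapping.single m 1 \<in> I)"
proof -
  have id: "is_ideal I" using mono by (simp add: monomial_ideal_def)
  obtain G where G: "G \<subseteq> range ymon" "I = ideal_gen G" using mono by (auto simp: monomial_ideal_def)
  define J where "J = {p :: ('n,'k) dpoly. \<forall>m\<in>Poly_Mapping.keys p. Poly_Mapping.single m 1 \<in> I}"
  have "is_ideal J"
    unfolding is_ideal_def
  proof (intro conjI ballI allI impI)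
    show "0 \<in> J" by (simp add: J_def)
    fix a b assume "a \<in> J" "b \<in> J"
    then show "a + b \<in> J" using keys_add[of a b] by (auto simp: J_def)
  next
    fix r a assume "a \<in> J"
    show "r * a \<in> J" unfolding J_def
    proof (unfold mem_Collect_eq, intro ballI)
      fix m assume "m \<in> Poly_Mapping.keys (r * a)"
      then obtain x y where "m = x + y" "x \<in> Poly_Mapping.keys r" "y \<in> Poly_Mapping.keys a"
        using keys_mult by blast
      then have "Poly_Mapping.single y 1 \<in> I" using \<open>a \<in> J\<close> by (simp add: J_def)
      then have "Poly_Mapping.single x 1 * Poly_Mapping.single y 1 \<in> I" by (rule ideal_mult[OF id])
      then show "Poly_Mapping.single m 1 \<in> I" using \<open>m = x + y\<close> by (simp add: mult_single)
    qed
  qed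
  moreover have "G \<subseteq> J"
  proof
    fix g assume "g \<in> G"
    then obtain u where u: "g = ymon u" using G by auto
    have "g \<in> I" using \<open>g \<in> G\<close> G(2) by (auto simp: ideal_gen_def)
    then show "g \<in> J" using u by (simp add: J_def ymon_def)
  qed
  ultimately have "ideal_gen G \<subseteq> J" unfolding ideal_gen_def by blast
  then have "I \<subseteq> J" using G(2) by simp
  moreover have "J \<subseteq> I"
  proof
    fix p assume "p \<in> J"
    have "(\<Sum>m\<in>Poly_Mapping.keys p. Poly_Mapping.single m (Poly_Mapping.lookup p m)) \<in> I"
    proof (rule ideal_sum[OF id])
      fix m assume "m \<in> Poly_Mapping.keys p"
      then have "Poly_Mapping.single m 1 \<in> I" using \<open>p \<in> J\<close> by (simp add: J_def)
      then have "Poly_Mapping.single 0 (Poly_Mapping.lookup p m) * Poly_Mapping.single m 1 \<in> I" by (rule ideal_mult[OF id])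
      then show "Poly_Mapping.single m (Poly_Mapping.lookup p m) \<in> I" by (simp add: mult_single)
    qed simp
    then show "p \<in> I" by (simp add: pm_sum_singles)
  qed
  ultimately show ?thesis by (auto simp: J_def)
qed



lemma lookup_exp:
  "Poly_Mapping.lookup (exp_monomial u) (i, j) = coeff (u i) j"
proof -
  have "{x. (\<lambda>(i, j). coeff (u i) j) x \<noteq> 0} \<subseteq> (\<Union>i. {i} \<times> {..degree (u i)})"
    by (auto intro: le_degree)
  then have "finite {x. (\<lambda>(i, j). coeff (u i) j) x \<noteq> 0}"
    by (rule finite_subset) auto
  then show ?thesis by (simp add: exp_monomial_def)
qed

lemma exp_add: "exp_monomial (\<lambda>i. u i + v i) = exp_monomial u + exp_monomial v"
  by (rule poly_mapping_eqI) (auto simp: lookup_exp lookup_add)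

lemma exp_zero: "exp_monomial (\<lambda>i. 0) = 0"
  by (rule poly_mapping_eqI) (auto simp: lookup_exp)

lemma exp_surj: "\<exists>u. exp_monomial u = (m :: ('n::finite \<times> nat) \<Rightarrow>\<^sub>0 nat)"
proof -
  have "finite (snd ` Poly_Mapping.keys m)" by simp
  then obtain B where B: "\<And>x. x \<in> snd ` Poly_Mapping.keys m \<Longrightarrow> x < B"
    by (meson finite_nat_set_iff_bounded)
  define u where "u i = (\<Sum>j<B. monom (Poly_Mapping.lookup m (i, j)) j)" for i
  have "exp_monomial u = m"
  proof (rule poly_mapping_eqI)
    fix k :: "'n \<times> nat"
    obtain i j where k: "k = (i, j)" by fastforce
    have "coeff (u i) j = (if j < B then Poly_Mapping.lookup m (i, j) else 0)"
      by (simp add: u_def coeff_sum coeff_monom)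
    also have "\<dots> = Poly_Mapping.lookup m (i, j)"
      using B[of j] by (force simp: in_keys_iff)
    finally show "Poly_Mapping.lookup (exp_monomial u) k = Poly_Mapping.lookup m k"
      by (simp add: k lookup_exp)
  qed
  then show ?thesis by blast
qed

lemma lookup_shift:
  "Poly_Mapping.lookup (shift_mon m) (i, j) = (if j = 0 then 0 else Poly_Mapping.lookup m (i, j - 1))"
proof -
  let ?f = "\<lambda>(i, j). if j = 0 then 0 else Poly_Mapping.lookup m (i, j - 1)"
  have "{x. ?f x \<noteq> 0} \<subseteq> (\<lambda>(i, j). (i, Suc j)) ` Poly_Mapping.keys m"
  proof
    fix x assume "x \<in> {x. ?f x \<noteq> 0}"
    then obtain i j where x: "x = (i, j)" "j \<noteq> 0" "Poly_Mapping.lookup m (i, j - 1) \<noteq> 0"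
      by (cases x) (auto split: if_splits)
    then have "(i, j - 1) \<in> Poly_Mapping.keys m" by (simp add: in_keys_iff)
    moreover have "x = (\<lambda>(i, j). (i, Suc j)) (i, j - 1)" using x by simp
    ultimately show "x \<in> (\<lambda>(i, j). (i, Suc j)) ` Poly_Mapping.keys m" by blast
  qed
  then have "finite {x. ?f x \<noteq> 0}" by (rule finite_subset) simp
  then show ?thesis by (simp add: shift_mon_def)
qed

lemma shift_inj:
  fixes a b :: "('n \<times> nat) \<Rightarrow>\<^sub>0 nat"
  shows "shift_mon a = shift_mon b \<Longrightarrow> a = b"
proof (rule poly_mapping_eqI)
  fix k :: "'n \<times> nat" assume "shift_mon a = shift_mon b"
  obtain i j where k: "k = (i, j)" by fastforce
  have "Poly_Mapping.lookup (shift_mon a) (i, Suc j) = Poly_Mapping.lookup (shift_mon b) (i, Suc j)"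
    using \<open>shift_mon a = shift_mon b\<close> by simp
  then show "Poly_Mapping.lookup a k = Poly_Mapping.lookup b k" by (simp add: lookup_shift k)
qed

lemma exp_monom_shift:
  "exp_monomial (\<lambda>i. monom 1 (Suc k) * u i) = shift_mon (exp_monomial (\<lambda>i. monom 1 k * u i))"
proof (rule poly_mapping_eqI)
  fix x :: "'a \<times> nat"
  obtain i j where x: "x = (i, j)" by fastforce
  show "Poly_Mapping.lookup (exp_monomial (\<lambda>i. monom 1 (Suc k) * u i)) x =
        Poly_Mapping.lookup (shift_mon (exp_monomial (\<lambda>i. monom 1 k * u i))) x"
    by (auto simp: x lookup_exp lookup_shift coeff_monom_mult Suc_diff_Suc)
qed

lemma exp_monom_0: "exp_monomial (\<lambda>i. monom 1 0 * u i) = exp_monomial u"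
  by (subst monom_eq_1) simp

lemma exp_shift_smult: "exp_monomial (exps_smult [:0, 1:] u) = shift_mon (exp_monomial u)"
proof -
  have "[:0, 1:] = (monom 1 (Suc 0) :: nat poly)" by (simp add: monom_Suc monom_0)
  then show ?thesis using exp_monom_shift[of 0 u] exp_monom_0[of u] by (simp add: exps_smult_def)
qed



definition enum_n :: "nat \<Rightarrow> 'n::finite" where
  "enum_n = (SOME h. bij_betw h {0..<card (UNIV::'n set)} UNIV)"

lemma enum_n_surj: "\<exists>r<card (UNIV::'n set). enum_n r = (i::'n::finite)"
proof -
  have "\<exists>h. bij_betw h {0..<card (UNIV::'n set)} (UNIV::'n set)"
    using ex_bij_betw_nat_finite[of "UNIV::'n set"] by simp
  then have "bij_betw (enum_n::nat \<Rightarrow> 'n) {0..<card (UNIV::'n set)} UNIV"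
    unfolding enum_n_def by (rule someI_ex)
  then have "i \<in> enum_n ` {0..<card (UNIV::'n set)}" by (auto simp: bij_betw_def)
  then show ?thesis by auto
qed

definition FF :: "(('n::finite \<times> nat) \<Rightarrow>\<^sub>0 nat) \<Rightarrow> nat \<Rightarrow> nat" where
  "FF m r = Poly_Mapping.lookup m (enum_n (r mod card (UNIV::'n set)), r div card (UNIV::'n set))"

definition lexlt :: "(nat \<Rightarrow> nat) \<Rightarrow> (nat \<Rightarrow> nat) \<Rightarrow> bool" where
  "lexlt f g \<longleftrightarrow> (\<exists>k. f k < g k \<and> (\<forall>k'<k. f k' = g k'))"

definition mlt :: "(('n::finite \<times> nat) \<Rightarrow>\<^sub>0 nat) \<Rightarrow> (('n \<times> nat) \<Rightarrow>\<^sub>0 nat) \<Rightarrow> bool" where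
  "mlt a b \<longleftrightarrow> lexlt (FF a) (FF b)"

lemma lexlt_irrefl: "\<not> lexlt f f"
  by (auto simp: lexlt_def)

lemma lexlt_trans: "lexlt f g \<Longrightarrow> lexlt g h \<Longrightarrow> lexlt f h"
  unfolding lexlt_def
proof (elim exE conjE)
  fix k1 k2 assume a: "f k1 < g k1" "\<forall>k'<k1. f k' = g k'" "g k2 < h k2" "\<forall>k'<k2. g k' = h k'"
  show "\<exists>k. f k < h k \<and> (\<forall>k'<k. f k' = h k')"
  proof (cases k1 k2 rule: linorder_cases)
    case less then show ?thesis using a by (intro exI[of _ k1]) auto
  next
    case equal then show ?thesis using a by (intro exI[of _ k1]) auto
  next
    case greater then show ?thesis using a by (intro exI[of _ k2]) auto
  qed
qed

lemma lexlt_total: "f \<noteq> g \<Longrightarrow> lexlt f g \<or> lexlt g f"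
proof -
  assume "f \<noteq> g"
  then have ex: "\<exists>k. f k \<noteq> g k" by auto
  define k where "k = (LEAST k. f k \<noteq> g k)"
  have "f k \<noteq> g k" unfolding k_def by (rule LeastI_ex[OF ex])
  moreover have "\<forall>k'<k. f k' = g k'" unfolding k_def using not_less_Least by blast
  ultimately show ?thesis unfolding lexlt_def
    by (metis linorder_neq_iff)
qed

lemma FF_inj:
  fixes a b :: "('n::finite \<times> nat) \<Rightarrow>\<^sub>0 nat"
  shows "FF a = FF b \<Longrightarrow> a = b"
proof (rule poly_mapping_eqI)
  fix k :: "'n \<times> nat"
  assume eq: "FF a = FF b"
  obtain i j where k: "k = (i, j)" by fastforce
  obtain r0 where r0: "r0 < card (UNIV::'n set)" "enum_n r0 = i" using enum_n_surj by blast
  have "(j * card (UNIV::'n set) + r0) mod card (UNIV::'n set) = r0" "(j * card (UNIV::'n set) + r0) div card (UNIV::'n set) = j"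
    using r0 by auto
  then have "FF a (j * card (UNIV::'n set) + r0) = Poly_Mapping.lookup a k"
            "FF b (j * card (UNIV::'n set) + r0) = Poly_Mapping.lookup b k"
    by (simp_all add: FF_def k r0)
  then show "Poly_Mapping.lookup a k = Poly_Mapping.lookup b k" using eq by metis
qed

lemma mlt_irrefl: "\<not> mlt a a"
  by (simp add: mlt_def lexlt_irrefl)

lemma mlt_trans: "mlt a b \<Longrightarrow> mlt b c \<Longrightarrow> mlt a c"
  unfolding mlt_def by (rule lexlt_trans)

lemma mlt_total: "a \<noteq> b \<Longrightarrow> mlt a b \<or> mlt b a"
  unfolding mlt_def using lexlt_total FF_inj by blast

lemma FF_add: "FF (a + b) r = FF a r + FF b r"
  by (simp add: FF_def lookup_add)

lemma mlt_add: "mlt a b \<Longrightarrow> mlt (a + c) (b + c)"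
  unfolding mlt_def lexlt_def FF_add by auto

lemma mlt_add2: "mlt a b \<Longrightarrow> mlt (c + a) (c + b)"
  using mlt_add[of a b c] by (simp add: add.commute)

lemma FF_shift: "FF (shift_mon a) r = (if r < card (UNIV::'n set) then 0 else FF a (r - card (UNIV::'n set)))"
  for a :: "('n::finite \<times> nat) \<Rightarrow>\<^sub>0 nat"
proof (cases "r < card (UNIV::'n set)")
  case True then show ?thesis by (simp add: FF_def lookup_shift)
next
  case False
  then obtain s where s: "r = s + card (UNIV::'n set)" by (metis add.commute le_add_diff_inverse not_less)
  have "r div card (UNIV::'n set) = Suc (s div card (UNIV::'n set))" "r mod card (UNIV::'n set) = s mod card (UNIV::'n set)"
    using s by (simp_all add: div_add_self2)
  then show ?thesis using False s by (simp add: FF_def lookup_shift)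
qed

lemma mlt_shift: "mlt a b \<Longrightarrow> mlt (shift_mon a) (shift_mon b)"
  for a b :: "('n::finite \<times> nat) \<Rightarrow>\<^sub>0 nat"
  unfolding mlt_def lexlt_def
proof (elim exE conjE)
  fix k assume a: "FF a k < FF b k" "\<forall>k'<k. FF a k' = FF b k'"
  show "\<exists>k. FF (shift_mon a) k < FF (shift_mon b) k \<and> (\<forall>k'<k. FF (shift_mon a) k' = FF (shift_mon b) k')"
    using a by (intro exI[of _ "k + card (UNIV::'n set)"]) (auto simp: FF_shift)
qed



definition lead_is :: "((('n::finite \<times> nat) \<Rightarrow>\<^sub>0 nat) \<Rightarrow>\<^sub>0 'k::zero) \<Rightarrow> (('n \<times> nat) \<Rightarrow>\<^sub>0 nat) \<Rightarrow> bool" where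
  "lead_is p e \<longleftrightarrow> e \<in> Poly_Mapping.keys p \<and> (\<forall>k\<in>Poly_Mapping.keys p. k \<noteq> e \<longrightarrow> mlt k e)"

lemma max_exists:
  "finite K \<Longrightarrow> K \<noteq> {} \<Longrightarrow> \<exists>e\<in>K. \<forall>k\<in>K. k \<noteq> e \<longrightarrow> mlt k e"
proof (induction K rule: finite_ne_induct)
  case (singleton x) then show ?case by simp
next
  case (insert x F)
  then obtain e where e: "e \<in> F" "\<forall>k\<in>F. k \<noteq> e \<longrightarrow> mlt k e" by blast
  have "x \<noteq> e" using e insert by auto
  then consider "mlt x e" | "mlt e x" using mlt_total by blast
  then show ?case
  proof cases
    case 1 then show ?thesis using e by auto
  next
    case 2
    have "\<forall>k\<in>insert x F. k \<noteq> x \<longrightarrow> mlt k x"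
    proof (intro ballI impI)
      fix k assume "k \<in> insert x F" "k \<noteq> x"
      then have "k \<in> F" by simp
      show "mlt k x"
      proof (cases "k = e")
        case True then show ?thesis using 2 by simp
      next
        case False then show ?thesis using e \<open>k \<in> F\<close> 2 mlt_trans by blast
      qed
    qed
    then show ?thesis by blast
  qed
qed

lemma lead_exists: "p \<noteq> 0 \<Longrightarrow> \<exists>e. lead_is p e"
  using max_exists[of "Poly_Mapping.keys p"] by (auto simp: lead_is_def)

lemma mle_lt: "(a = e \<or> mlt a e) \<Longrightarrow> (b = f \<or> mlt b f) \<Longrightarrow> (a \<noteq> e \<or> b \<noteq> f) \<Longrightarrow> mlt (a + b) (e + f)"
proof -
  assume h: "a = e \<or> mlt a e" "b = f \<or> mlt b f" "a \<noteq> e \<or> b \<noteq> f"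
  show ?thesis
  proof (cases "a = e")
    case True then show ?thesis using h by (auto intro: mlt_add2)
  next
    case False
    then have 1: "mlt (a + b) (e + b)" using h by (auto intro: mlt_add)
    show ?thesis
    proof (cases "b = f")
      case True then show ?thesis using 1 by simp
    next
      case False
      then have "mlt (e + b) (e + f)" using h by (auto intro: mlt_add2)
      then show ?thesis using 1 mlt_trans by blast
    qed
  qed
qed

lemma keys_mult_avoid:
  assumes "\<forall>a\<in>Poly_Mapping.keys P. a = e \<or> mlt a e" "\<forall>b\<in>Poly_Mapping.keys Q. b = f \<or> mlt b f"
    "\<forall>a\<in>Poly_Mapping.keys P. \<forall>b\<in>Poly_Mapping.keys Q. a \<noteq> e \<or> b \<noteq> f"
  shows "e + f \<notin> Poly_Mapping.keys (P * Q)"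
proof
  assume "e + f \<in> Poly_Mapping.keys (P * Q)"
  then obtain a b where ab: "e + f = a + b" "a \<in> Poly_Mapping.keys P" "b \<in> Poly_Mapping.keys Q"
    using keys_mult by blast
  then have "mlt (a + b) (e + f)" using assms mle_lt by blast
  then show False using ab(1) mlt_irrefl by metis
qed

lemma lead_mult:
  fixes p q :: "('n::finite, 'k::idom) dpoly"
  assumes lp: "lead_is p e" and lq: "lead_is q f"
  shows "lead_is (p * q) (e + f)"
proof -
  define c where "c = Poly_Mapping.lookup p e"
  define d where "d = Poly_Mapping.lookup q f"
  have c: "c \<noteq> 0" using lp by (simp add: lead_is_def c_def in_keys_iff)
  have d: "d \<noteq> 0" using lq by (simp add: lead_is_def d_def in_keys_iff)
  define p' where "p' = p - Poly_Mapping.single e c"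
  define q' where "q' = q - Poly_Mapping.single f d"
  have kp': "k \<in> Poly_Mapping.keys p' \<Longrightarrow> k \<in> Poly_Mapping.keys p \<and> k \<noteq> e" for k
    by (auto simp: p'_def in_keys_iff lookup_minus lookup_single when_def c_def split: if_splits)
  have kq': "k \<in> Poly_Mapping.keys q' \<Longrightarrow> k \<in> Poly_Mapping.keys q \<and> k \<noteq> f" for k
    by (auto simp: q'_def in_keys_iff lookup_minus lookup_single when_def d_def split: if_splits)
  have le_p: "\<forall>a\<in>Poly_Mapping.keys p. a = e \<or> mlt a e" using lp by (auto simp: lead_is_def)
  have le_q: "\<forall>a\<in>Poly_Mapping.keys q. a = f \<or> mlt a f" using lq by (auto simp: lead_is_def)
  have dec: "p * q = Poly_Mapping.single e c * Poly_Mapping.single f d + Poly_Mapping.single e c * q' + p' * q"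
    by (simp add: p'_def q'_def algebra_simps)
  have z1: "e + f \<notin> Poly_Mapping.keys (Poly_Mapping.single e c * q')"
    by (rule keys_mult_avoid) (use kq' le_q in auto)
  have z2: "e + f \<notin> Poly_Mapping.keys (p' * q)"
    by (rule keys_mult_avoid) (use kp' le_p le_q in auto)
  have "Poly_Mapping.lookup (p * q) (e + f) = c * d"
    using z1 z2 by (simp add: dec lookup_add mult_single in_keys_iff)
  then have "e + f \<in> Poly_Mapping.keys (p * q)" using c d by (simp add: in_keys_iff)
  moreover have "\<forall>k\<in>Poly_Mapping.keys (p * q). k \<noteq> e + f \<longrightarrow> mlt k (e + f)"
  proof (intro ballI impI)
    fix k assume "k \<in> Poly_Mapping.keys (p * q)" "k \<noteq> e + f"
    then obtain a b where "k = a + b" "a \<in> Poly_Mapping.keys p" "b \<in> Poly_Mapping.keys q"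
      using keys_mult by blast
    then show "mlt k (e + f)" using le_p le_q mle_lt \<open>k \<noteq> e + f\<close> by blast
  qed
  ultimately show ?thesis by (simp add: lead_is_def)
qed

lemma lead_one: "lead_is (1 :: ('n::finite, 'k::comm_ring_1) dpoly) 0"
  by (simp add: lead_is_def)

lemma lead_prod:
  fixes P :: "'i \<Rightarrow> ('n::finite, 'k::idom) dpoly"
  assumes "finite A" "\<And>i. i \<in> A \<Longrightarrow> lead_is (P i) (exp_monomial (W i))"
  shows "lead_is (prod P A) (exp_monomial (\<lambda>j. \<Sum>i\<in>A. W i j))"
  using assms
proof (induction A rule: finite_induct)
  case empty then show ?case by (simp add: exp_zero lead_one)
next
  case (insert a F)
  have "lead_is (P a * prod P F) (exp_monomial (W a) + exp_monomial (\<lambda>j. \<Sum>i\<in>F. W i j))"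
    using insert by (intro lead_mult) auto
  then show ?case using insert by (simp add: exp_add)
qed

lemma lead_power:
  fixes p :: "('n::finite, 'k::idom) dpoly"
  assumes "lead_is p (exp_monomial w)"
  shows "lead_is (p ^ n) (exp_monomial (\<lambda>j. of_nat n * w j))"
proof -
  have "lead_is (\<Prod>i\<in>{..<n}. p) (exp_monomial (\<lambda>j. \<Sum>i\<in>{..<n}. w j))"
    using assms by (intro lead_prod) auto
  then show ?thesis by simp
qed



definition rhom :: "('k::field \<Rightarrow> 'k) \<Rightarrow> bool" where
  "rhom \<sigma> \<longleftrightarrow> (\<forall>a b. \<sigma> (a + b) = \<sigma> a + \<sigma> b) \<and> (\<forall>a b. \<sigma> (a * b) = \<sigma> a * \<sigma> b) \<and> \<sigma> 1 = 1"

lemma rhom_zero: "rhom \<sigma> \<Longrightarrow> \<sigma> 0 = 0"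
  unfolding rhom_def by (metis add_cancel_right_right add_0)

lemma rhom_nz: "rhom \<sigma> \<Longrightarrow> c \<noteq> 0 \<Longrightarrow> \<sigma> c \<noteq> 0"
proof
  assume h: "rhom \<sigma>" "c \<noteq> 0" "\<sigma> c = 0"
  have "\<sigma> (c * inverse c) = \<sigma> c * \<sigma> (inverse c)" using h(1) by (simp add: rhom_def)
  then show False using h by (simp add: rhom_def)
qed

lemma lookup_sigmaR_shift:
  assumes "rhom \<sigma>"
  shows "Poly_Mapping.lookup (sigmaR \<sigma> p) (shift_mon m) = \<sigma> (Poly_Mapping.lookup p m)"
proof -
  have "Poly_Mapping.lookup (sigmaR \<sigma> p) (shift_mon m) =
        (\<Sum>m'\<in>Poly_Mapping.keys p. if m' = m then \<sigma> (Poly_Mapping.lookup p m') else 0)"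
    unfolding sigmaR_def lookup_sum
    by (rule sum.cong) (auto simp: lookup_single when_def dest: shift_inj)
  also have "\<dots> = \<sigma> (Poly_Mapping.lookup p m)"
    using rhom_zero[OF assms] by (simp add: sum.delta in_keys_iff)
  finally show ?thesis .
qed

lemma lookup_sigmaR_other:
  assumes "\<forall>m. k \<noteq> shift_mon m"
  shows "Poly_Mapping.lookup (sigmaR \<sigma> p) k = 0"
  unfolding sigmaR_def lookup_sum using assms
  by (intro sum.neutral) (auto simp: lookup_single when_def)

lemma sigmaR_eqI:
  assumes "\<And>m. Poly_Mapping.lookup P (shift_mon m) = Poly_Mapping.lookup Q (shift_mon m)"
    "\<And>k. \<forall>m. k \<noteq> shift_mon m \<Longrightarrow> Poly_Mapping.lookup P k = Poly_Mapping.lookup Q k"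
  shows "P = Q"
  by (rule poly_mapping_eqI) (metis assms)

lemma sigmaR_add: "rhom \<sigma> \<Longrightarrow> sigmaR \<sigma> (p + q) = sigmaR \<sigma> p + sigmaR \<sigma> q"
  by (rule sigmaR_eqI) (auto simp: lookup_sigmaR_shift lookup_sigmaR_other lookup_add rhom_def)

lemma sigmaR_diff: "rhom \<sigma> \<Longrightarrow> sigmaR \<sigma> (p - q) = sigmaR \<sigma> p - sigmaR \<sigma> q"
  using sigmaR_add[of \<sigma> "p - q" q] by (simp add: algebra_simps)

lemma sigmaR_single: "rhom \<sigma> \<Longrightarrow> sigmaR \<sigma> (Poly_Mapping.single m c) = Poly_Mapping.single (shift_mon m) (\<sigma> c)"
  by (rule sigmaR_eqI)
     (auto simp: lookup_sigmaR_shift lookup_sigmaR_other lookup_single when_def rhom_zero dest: shift_inj)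

lemma keys_sigmaR: "rhom \<sigma> \<Longrightarrow> Poly_Mapping.keys (sigmaR \<sigma> p) = shift_mon ` Poly_Mapping.keys p"
proof (intro set_eqI iffI)
  fix k assume h: "rhom \<sigma>" "k \<in> Poly_Mapping.keys (sigmaR \<sigma> p)"
  then obtain m where m: "k = shift_mon m" using lookup_sigmaR_other by (force simp: in_keys_iff)
  then have "\<sigma> (Poly_Mapping.lookup p m) \<noteq> 0" using h by (simp add: lookup_sigmaR_shift in_keys_iff)
  then have "m \<in> Poly_Mapping.keys p" using rhom_zero[OF h(1)] by (auto simp: in_keys_iff)
  then show "k \<in> shift_mon ` Poly_Mapping.keys p" using m by blast
next
  fix k assume h: "rhom \<sigma>" "k \<in> shift_mon ` Poly_Mapping.keys p"
  then show "k \<in> Poly_Mapping.keys (sigmaR \<sigma> p)"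
    by (auto simp: lookup_sigmaR_shift in_keys_iff dest: rhom_nz[OF h(1)])
qed

lemma lead_sigma:
  assumes "rhom \<sigma>" "lead_is p e"
  shows "lead_is (sigmaR \<sigma> p) (shift_mon e)"
  using assms by (auto simp: lead_is_def keys_sigmaR intro: mlt_shift)

lemma lead_sigma_pow:
  assumes "rhom \<sigma>" "lead_is p (exp_monomial u)"
  shows "lead_is ((sigmaR \<sigma> ^^ i) p) (exp_monomial (\<lambda>j. monom 1 i * u j))"
proof (induction i)
  case 0 then show ?case using assms(2) exp_monom_0[of u] by simp
next
  case (Suc i)
  have e: "exp_monomial (\<lambda>j. monom 1 (Suc i) * u j) = shift_mon (exp_monomial (\<lambda>j. monom 1 i * u j))"
    by (rule exp_monom_shift)
  have "lead_is (sigmaR \<sigma> ((sigmaR \<sigma> ^^ i) p)) (shift_mon (exp_monomial (\<lambda>j. monom 1 i * u j)))"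
    by (rule lead_sigma[OF assms(1) Suc])
  then show ?case by (simp only: e funpow.simps o_apply)
qed

lemma of_nat_monom: "(of_nat c :: nat poly) * monom 1 i = monom c i"
proof -
  have "(of_nat c :: nat poly) = monom c 0" by (simp add: of_nat_poly monom_0)
  then show ?thesis by (simp add: mult_monom)
qed

lemma sum_monoms_mult:
  "(\<Sum>i\<le>degree g. of_nat (coeff g i) * (monom 1 i * x)) = g * (x :: nat poly)"
proof -
  have "(\<Sum>i\<le>degree g. of_nat (coeff g i) * (monom 1 i * x)) = (\<Sum>i\<le>degree g. monom (coeff g i) i) * x"
  proof -
    have "\<And>i. of_nat (coeff g i) * (monom 1 i * x) = monom (coeff g i) i * x"
      by (simp only: mult.assoc[symmetric] of_nat_monom)
    then show ?thesis by (simp only: sum_distrib_right)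
  qed
  then show ?thesis by (simp add: poly_as_sum_of_monoms)
qed

lemma lead_dpower:
  fixes a :: "('n::finite, 'k::field) dpoly"
  assumes "rhom \<sigma>" "lead_is a (exp_monomial u)"
  shows "lead_is (dpower \<sigma> a g) (exp_monomial (exps_smult g u))"
proof -
  have "lead_is (dpower \<sigma> a g)
          (exp_monomial (\<lambda>j. \<Sum>i\<le>degree g. of_nat (coeff g i) * (monom 1 i * u j)))"
    unfolding dpower_def
    by (intro lead_prod lead_power lead_sigma_pow assms) simp
  moreover have "(\<lambda>j. \<Sum>i\<le>degree g. of_nat (coeff g i) * (monom 1 i * u j)) = exps_smult g u"
    unfolding exps_smult_def by (rule ext, rule sum_monoms_mult)
  ultimately show ?thesis by simp
qed



lemma ymon_add: "ymon (exps_add u v) = ymon u * (ymon v :: ('n::finite, 'k::comm_ring_1) dpoly)"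
  by (simp add: ymon_def exps_add_def exp_add mult_single)

lemma ymon_add': "ymon (\<lambda>i. u i + v i) = ymon u * (ymon v :: ('n::finite, 'k::comm_ring_1) dpoly)"
  using ymon_add[of u v] by (simp add: exps_add_def)

lemma ymon_zero: "ymon (\<lambda>i. 0) = (1 :: ('n::finite, 'k::comm_ring_1) dpoly)"
  by (simp add: ymon_def exp_zero)

lemma sigmaR_ymon:
  fixes \<sigma> :: "'k::field \<Rightarrow> 'k"
  assumes "rhom \<sigma>"
  shows "(sigmaR \<sigma> ^^ i) (ymon u :: ('n::finite, 'k) dpoly) = ymon (\<lambda>j. monom 1 i * u j)"
proof (induction i)
  case 0 then show ?case using exp_monom_0[of u] by (simp add: ymon_def)
next
  case (Suc i)
  have e: "exp_monomial (\<lambda>j. monom 1 (Suc i) * u j) = shift_mon (exp_monomial (\<lambda>j. monom 1 i * u j))"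
    by (rule exp_monom_shift)
  have "sigmaR \<sigma> (ymon (\<lambda>j. monom 1 i * u j) :: ('n, 'k) dpoly) = ymon (\<lambda>j. monom 1 (Suc i) * u j)"
    unfolding ymon_def e using assms by (simp add: sigmaR_single rhom_def)
  then show ?case using Suc by simp
qed

lemma ymon_prod:
  assumes "finite A"
  shows "(\<Prod>i\<in>A. ymon (W i)) = (ymon (\<lambda>j. \<Sum>i\<in>A. W i j) :: ('n::finite, 'k::comm_ring_1) dpoly)"
  using assms
proof (induction A rule: finite_induct)
  case empty then show ?case by (simp add: ymon_zero)
next
  case (insert a F) then show ?case by (simp add: ymon_add')
qed

lemma ymon_power:
  "ymon w ^ n = (ymon (\<lambda>j. of_nat n * w j) :: ('n::finite, 'k::comm_ring_1) dpoly)"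
proof -
  have "ymon w ^ n = (\<Prod>i\<in>{..<n}. (ymon w :: ('n, 'k) dpoly))" by simp
  also have "\<dots> = ymon (\<lambda>j. \<Sum>i\<in>{..<n}. w j)" by (rule ymon_prod) simp
  finally show ?thesis by simp
qed

lemma dpower_ymon:
  fixes \<sigma> :: "'k::field \<Rightarrow> 'k"
  assumes "rhom \<sigma>"
  shows "dpower \<sigma> (ymon u :: ('n::finite, 'k) dpoly) g = ymon (exps_smult g u)"
proof -
  have "dpower \<sigma> (ymon u :: ('n, 'k) dpoly) g =
        (\<Prod>i\<le>degree g. ymon (\<lambda>j. of_nat (coeff g i) * (monom 1 i * u j)))"
    unfolding dpower_def by (simp add: sigmaR_ymon[OF assms] ymon_power)
  also have "\<dots> = ymon (\<lambda>j. \<Sum>i\<le>degree g. of_nat (coeff g i) * (monom 1 i * u j))"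
    by (rule ymon_prod) simp
  also have "(\<lambda>j. \<Sum>i\<le>degree g. of_nat (coeff g i) * (monom 1 i * u j)) = exps_smult g u"
    unfolding exps_smult_def by (rule ext, rule sum_monoms_mult)
  finally show ?thesis .
qed

lemma sigma_pow_cong:
  assumes "is_ideal I" "sigma_ideal \<sigma> I" "rhom \<sigma>" "a - b \<in> I"
  shows "(sigmaR \<sigma> ^^ i) a - (sigmaR \<sigma> ^^ i) b \<in> I"
proof (induction i)
  case 0 then show ?case using assms by simp
next
  case (Suc i)
  have "sigmaR \<sigma> ((sigmaR \<sigma> ^^ i) a - (sigmaR \<sigma> ^^ i) b) \<in> I"
    using Suc assms(2) by (auto simp: sigma_ideal_def)
  then show ?case using assms(3) by (simp add: sigmaR_diff)
qed

lemma dpower_cong: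
  assumes "is_ideal I" "sigma_ideal \<sigma> I" "rhom \<sigma>" "a - b \<in> I"
  shows "dpower \<sigma> a g - dpower \<sigma> b g \<in> I"
  unfolding dpower_def
  by (rule ideal_cong_prod[OF assms(1) finite_atMost]) (rule ideal_cong_power[OF assms(1) sigma_pow_cong[OF assms]])

lemma reduce:
  fixes I :: "('n::finite, 'k::comm_ring_1) dpoly set"
  assumes mono: "monomial_ideal I" and a: "a \<notin> I"
  shows "\<exists>a'. a - a' \<in> I \<and> a' \<noteq> 0 \<and> (\<forall>m\<in>Poly_Mapping.keys a'. Poly_Mapping.single m 1 \<notin> I)"
proof -
  have id: "is_ideal I" using mono by (simp add: monomial_ideal_def)
  let ?f = "\<lambda>k. if Poly_Mapping.single k 1 \<in> I then 0 else Poly_Mapping.lookup a k"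
  have fin: "finite {k. ?f k \<noteq> 0}"
  proof (rule finite_subset[of _ "{k. Poly_Mapping.lookup a k \<noteq> 0}"])
    show "{k. ?f k \<noteq> 0} \<subseteq> {k. Poly_Mapping.lookup a k \<noteq> 0}" by (auto split: if_splits)
  qed simp
  define a' where "a' = Abs_poly_mapping ?f"
  have la': "Poly_Mapping.lookup a' k = ?f k" for k using fin by (simp add: a'_def)
  have "\<forall>m\<in>Poly_Mapping.keys (a - a'). Poly_Mapping.single m 1 \<in> I"
  proof
    fix m assume m: "m \<in> Poly_Mapping.keys (a - a')"
    show "Poly_Mapping.single m 1 \<in> I"
    proof (rule ccontr)
      assume "Poly_Mapping.single m 1 \<notin> I"
      then have "Poly_Mapping.lookup (a - a') m = 0" by (simp add: lookup_minus la')
      then show False using m by (simp add: in_keys_iff)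
    qed
  qed
  then have "a - a' \<in> I" using monomial_ideal_mem[OF mono] by blast
  moreover have "\<forall>m\<in>Poly_Mapping.keys a'. Poly_Mapping.single m 1 \<notin> I"
  proof
    fix m assume m: "m \<in> Poly_Mapping.keys a'"
    show "Poly_Mapping.single m 1 \<notin> I"
    proof
      assume "Poly_Mapping.single m 1 \<in> I"
      then have "Poly_Mapping.lookup a' m = 0" by (simp add: la')
      then show False using m by (simp add: in_keys_iff)
    qed
  qed
  moreover have "a' \<noteq> 0"
  proof
    assume "a' = 0"
    then show False using \<open>a - a' \<in> I\<close> a by simp
  qed
  ultimately show ?thesis by blast
qed

lemma reduce_lead:
  fixes I :: "('n::finite, 'k::comm_ring_1) dpoly set"
  assumes mono: "monomial_ideal I" and a: "a \<notin> I"
  shows "\<exists>a' u. a - a' \<in> I \<and> lead_is a' (exp_monomial u) \<and> u \<notin> support_set I"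
proof -
  obtain a' where a': "a - a' \<in> I" "a' \<noteq> 0" "\<forall>m\<in>Poly_Mapping.keys a'. Poly_Mapping.single m 1 \<notin> I"
    using reduce[OF assms] by blast
  obtain e where e: "lead_is a' e" using lead_exists[OF a'(2)] by blast
  obtain u where u: "exp_monomial u = e" using exp_surj by blast
  have "e \<in> Poly_Mapping.keys a'" using e by (simp add: lead_is_def)
  then have "u \<notin> support_set I" using a'(3) u by (simp add: support_set_def ymon_def)
  then show ?thesis using a' e u by blast
qed

lemma lead_not_in:
  fixes I :: "('n::finite, 'k::comm_ring_1) dpoly set"
  assumes mono: "monomial_ideal I" "lead_is p (exp_monomial u)" "u \<notin> support_set I"
  shows "p \<notin> I"
proof
  assume "p \<in> I"
  moreover have "exp_monomial u \<in> Poly_Mapping.keys p" using assms(2) by (simp add: lead_is_def)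
  ultimately have "Poly_Mapping.single (exp_monomial u) 1 \<in> I" using monomial_ideal_mem[OF mono(1)] by blast
  then show False using assms(3) by (simp add: support_set_def ymon_def)
qed

lemma dpower_reflect:
  fixes I :: "('n::finite, 'k::field) dpoly set"
  assumes mono: "monomial_ideal I" and sig: "sigma_ideal \<sigma> I" and rh: "rhom \<sigma>"
    and H: "\<forall>u. exps_smult g u \<in> support_set I \<longrightarrow> u \<in> support_set I"
    and d: "dpower \<sigma> a g \<in> I"
  shows "a \<in> I"
proof (rule ccontr)
  assume "a \<notin> I"
  then obtain a' u where a': "a - a' \<in> I" "lead_is a' (exp_monomial u)" "u \<notin> support_set I"
    using reduce_lead[OF mono] by blast
  have id: "is_ideal I" using mono by (simp add: monomial_ideal_def)
  have "lead_is (dpower \<sigma> a' g) (exp_monomial (exps_smult g u))"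
    by (rule lead_dpower[OF rh a'(2)])
  moreover have "exps_smult g u \<notin> support_set I" using H a'(3) by blast
  ultimately have "dpower \<sigma> a' g \<notin> I" by (rule lead_not_in[OF mono])
  moreover have "dpower \<sigma> a g - dpower \<sigma> a' g \<in> I" by (rule dpower_cong[OF id sig rh a'(1)])
  ultimately have "dpower \<sigma> a g \<notin> I" by (rule ideal_diff_mem[OF id, rotated])
  then show False using d by simp
qed



theorem proposition3p6:
  fixes \<sigma> :: "'k::field_char_0 \<Rightarrow> 'k"
    and I :: "('n::finite, 'k) dpoly set"
  assumes hom_add: "\<And>a b. \<sigma> (a + b) = \<sigma> a + \<sigma> b"
    and hom_mult: "\<And>a b. \<sigma> (a * b) = \<sigma> a * \<sigma> b"
    and hom_one: "\<sigma> 1 = 1"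
    and mono: "monomial_ideal I"
    and sig: "sigma_ideal \<sigma> I"
  shows "(radical_ideal I \<longleftrightarrow>
            (\<forall>(m::nat) u. m \<noteq> 0 \<longrightarrow> exps_smult [:m:] u \<in> support_set I \<longrightarrow> u \<in> support_set I))
       \<and> (reflexive_ideal \<sigma> I \<longleftrightarrow>
            (\<forall>u. exps_smult [:0, 1:] u \<in> support_set I \<longrightarrow> u \<in> support_set I))
       \<and> (perfect_ideal \<sigma> I \<longleftrightarrow>
            (\<forall>g u. g \<noteq> 0 \<longrightarrow> exps_smult g u \<in> support_set I \<longrightarrow> u \<in> support_set I))
       \<and> (I \<noteq> UNIV \<longrightarrow> (prime_ideal I \<longleftrightarrow>
            (\<forall>u v. exps_add u v \<in> support_set I \<longrightarrow> u \<in> support_set I \<or> v \<in> support_set I)))"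
proof -
  have rh: "rhom \<sigma>" using hom_add hom_mult hom_one by (simp add: rhom_def)
  have id: "is_ideal I" using mono by (simp add: monomial_ideal_def)
  have S: "u \<in> support_set I \<longleftrightarrow> ymon u \<in> I" for u by (simp add: support_set_def)
  have dp_const: "dpower \<sigma> a [:m:] = a ^ m" for a :: "('n, 'k) dpoly" and m
    by (simp add: dpower_def)
  have sm_const: "exps_smult [:m:] u = (\<lambda>j. of_nat m * u j)" for m u
    by (simp add: exps_smult_def of_nat_poly)
  have R: "radical_ideal I \<longleftrightarrow>
            (\<forall>(m::nat) u. m \<noteq> 0 \<longrightarrow> exps_smult [:m:] u \<in> support_set I \<longrightarrow> u \<in> support_set I)"
  proof
    assume r: "radical_ideal I"
    show "\<forall>(m::nat) u. m \<noteq> 0 \<longrightarrow> exps_smult [:m:] u \<in> support_set I \<longrightarrow> u \<in> support_set I"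
    proof (intro allI impI)
      fix m :: nat and u assume "m \<noteq> 0" "exps_smult [:m:] u \<in> support_set I"
      then have "ymon u ^ m \<in> I" by (simp add: S sm_const ymon_power)
      then show "u \<in> support_set I" using r \<open>m \<noteq> 0\<close> by (simp add: radical_ideal_def S)
    qed
  next
    assume H: "\<forall>(m::nat) u. m \<noteq> 0 \<longrightarrow> exps_smult [:m:] u \<in> support_set I \<longrightarrow> u \<in> support_set I"
    show "radical_ideal I" unfolding radical_ideal_def
    proof (intro allI impI)
      fix a :: "('n, 'k) dpoly" and m :: nat assume "m > 0" "a ^ m \<in> I"
      then show "a \<in> I"
        using dpower_reflect[OF mono sig rh, of "[:m:]" a] H by (simp add: dp_const)
    qed
  qed
  have Rf: "reflexive_ideal \<sigma> I \<longleftrightarrow>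
            (\<forall>u. exps_smult [:0, 1:] u \<in> support_set I \<longrightarrow> u \<in> support_set I)"
  proof
    assume r: "reflexive_ideal \<sigma> I"
    show "\<forall>u. exps_smult [:0, 1:] u \<in> support_set I \<longrightarrow> u \<in> support_set I"
    proof (intro allI impI)
      fix u assume "exps_smult [:0, 1:] u \<in> support_set I"
      moreover have "sigmaR \<sigma> (ymon u) = ymon (exps_smult [:0, 1:] u)"
        unfolding ymon_def exp_shift_smult using rh by (simp add: sigmaR_single rhom_def)
      ultimately have "sigmaR \<sigma> (ymon u) \<in> I" by (simp add: S)
      then show "u \<in> support_set I" using r by (simp add: reflexive_ideal_def S)
    qed
  next
    assume H: "\<forall>u. exps_smult [:0, 1:] u \<in> support_set I \<longrightarrow> u \<in> support_set I"
    show "reflexive_ideal \<sigma> I" unfolding reflexive_ideal_def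
    proof (intro allI impI)
      fix a :: "('n, 'k) dpoly" assume sa: "sigmaR \<sigma> a \<in> I"
      have "\<forall>m\<in>Poly_Mapping.keys a. Poly_Mapping.single m 1 \<in> I"
      proof
        fix m assume "m \<in> Poly_Mapping.keys a"
        then have "shift_mon m \<in> Poly_Mapping.keys (sigmaR \<sigma> a)" using rh by (simp add: keys_sigmaR)
        then have "Poly_Mapping.single (shift_mon m) 1 \<in> I" using sa monomial_ideal_mem[OF mono] by blast
        moreover obtain u where u: "exp_monomial u = m" using exp_surj by blast
        ultimately have "ymon (exps_smult [:0, 1:] u) \<in> I"
          unfolding ymon_def exp_shift_smult by simp
        then have "exps_smult [:0, 1:] u \<in> support_set I" by (simp add: S)
        then have "u \<in> support_set I" using H by blast
        then show "Poly_Mapping.single m 1 \<in> I" using u by (simp add: support_set_def ymon_def)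
      qed
      then show "a \<in> I" using monomial_ideal_mem[OF mono] by blast
    qed
  qed
  have P: "perfect_ideal \<sigma> I \<longleftrightarrow>
            (\<forall>g u. g \<noteq> 0 \<longrightarrow> exps_smult g u \<in> support_set I \<longrightarrow> u \<in> support_set I)"
  proof
    assume r: "perfect_ideal \<sigma> I"
    show "\<forall>g u. g \<noteq> 0 \<longrightarrow> exps_smult g u \<in> support_set I \<longrightarrow> u \<in> support_set I"
    proof (intro allI impI)
      fix g u assume "g \<noteq> 0" "exps_smult g u \<in> support_set I"
      then have "dpower \<sigma> (ymon u) g \<in> I" by (simp add: S dpower_ymon[OF rh])
      then show "u \<in> support_set I" using r \<open>g \<noteq> 0\<close> by (simp add: perfect_ideal_def S)
    qed
  next
    assume H: "\<forall>g u. g \<noteq> 0 \<longrightarrow> exps_smult g u \<in> support_set I \<longrightarrow> u \<in> support_set I"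
    show "perfect_ideal \<sigma> I" unfolding perfect_ideal_def
    proof (intro allI impI)
      fix a :: "('n, 'k) dpoly" and g :: "nat poly" assume "g \<noteq> 0" "dpower \<sigma> a g \<in> I"
      then show "a \<in> I"
        using dpower_reflect[OF mono sig rh, of g a] H by blast
    qed
  qed
  have Pr: "I \<noteq> UNIV \<longrightarrow> (prime_ideal I \<longleftrightarrow>
            (\<forall>u v. exps_add u v \<in> support_set I \<longrightarrow> u \<in> support_set I \<or> v \<in> support_set I))"
  proof (intro impI iffI)
    assume r: "prime_ideal I"
    show "\<forall>u v. exps_add u v \<in> support_set I \<longrightarrow> u \<in> support_set I \<or> v \<in> support_set I"
    proof (intro allI impI)
      fix u v assume "exps_add u v \<in> support_set I"
      then have "ymon u * ymon v \<in> I" by (simp add: S ymon_add)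
      then show "u \<in> support_set I \<or> v \<in> support_set I" using r by (simp add: prime_ideal_def S)
    qed
  next
    assume ne: "I \<noteq> UNIV"
      and H: "\<forall>u v. exps_add u v \<in> support_set I \<longrightarrow> u \<in> support_set I \<or> v \<in> support_set I"
    have "\<forall>a b. a * b \<in> I \<longrightarrow> a \<in> I \<or> b \<in> I"
    proof (intro allI impI)
      fix a b :: "('n, 'k) dpoly" assume ab: "a * b \<in> I"
      show "a \<in> I \<or> b \<in> I"
      proof (rule ccontr)
        assume "\<not> (a \<in> I \<or> b \<in> I)"
        then have "a \<notin> I" "b \<notin> I" by auto
        obtain a' u where a': "a - a' \<in> I" "lead_is a' (exp_monomial u)" "u \<notin> support_set I"
          using reduce_lead[OF mono \<open>a \<notin> I\<close>] by blast
        obtain b' v where b': "b - b' \<in> I" "lead_is b' (exp_monomial v)" "v \<notin> support_set I"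
          using reduce_lead[OF mono \<open>b \<notin> I\<close>] by blast
        have "lead_is (a' * b') (exp_monomial u + exp_monomial v)" by (rule lead_mult[OF a'(2) b'(2)])
        then have "lead_is (a' * b') (exp_monomial (exps_add u v))" by (simp add: exps_add_def exp_add)
        moreover have "exps_add u v \<notin> support_set I" using H a'(3) b'(3) by blast
        ultimately have "a' * b' \<notin> I" by (rule lead_not_in[OF mono])
        moreover have "a * b - a' * b' \<in> I" by (rule ideal_cong_mult[OF id a'(1) b'(1)])
        ultimately have "a * b \<notin> I" by (rule ideal_diff_mem[OF id, rotated])
        then show False using ab by simp
      qed
    qed
    then show "prime_ideal I" using id ne by (simp add: prime_ideal_def)
  qed
  show ?thesis using R Rf P Pr by blast
qed


end
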